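(* Let $b\in\mathbb{N}$, $0\le a\le b-1$, and let $m,n\ge2$ be the minimal integers with $ma\equiv a\pmod b$ and $a^n\equiv a\pmod b$ (assumed to exist). Put $I=(m-1)a/b$ and $J=(a^n-a)/b$ (these are nonnegative integers). Let $q\in\mathbb{N}$ and for $k=0,\dots,q-1$ let $x''_k=\{a+bk+bql : l\in\mathbb{Z}\}$ be the secondary classes. Define $\nu''_m[x''_{k_1},\dots,x''_{k_m}]$ to be the secondary class containing $x_{k_1}+\dots+x_{k_m}$ and $\mu''_n[x''_{k_1},\dots,x''_{k_n}]$ the secondary class containing $x_{k_1}\cdots x_{k_n}$, where $x_{k_i}$ is any representative of $x''_{k_i}$. Then these operations are well defined, commutative, satisfy polyadic distributivity, and $$\nu''_m[x''_{k_1},\dots,x''_{k_m}]=x''_{k_{add}},\qquad k_{add}\equiv (k_1+\dots+k_m)+I \pmod q,$$ $$\mu''_n[x''_{k_1},\dots,x''_{k_n}]=x''_{k_{mult}},\qquad k_{mult}\equiv \sum_{j=1}^{n} a^{n-j}b^{j-1}e_j(k_1,\dots,k_n)+J \pmod q,$$ where $e_j$ is the $j$-th elementary symmetric polynomial (so $e_1=k_1+\dots+k_n$, $e_2=\sum_{i<j}k_ik_j$, …, $e_n=k_1\cdots k_n$).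
   Context: Polyadic distributivity means: for all elements, $\mu''_n[\nu''_m[y_1,\dots,y_m],x_2,\dots,x_n]=\nu''_m[\mu''_n[y_1,x_2,\dots,x_n],\dots,\mu''_n[y_m,x_2,\dots,x_n]]$ (and likewise with the sum in any argument position of $\mu''_n$). *)

theory Defs
  imports "HOL-Number_Theory.Cong"
begin

definition sclass :: "int \<Rightarrow> int \<Rightarrow> int \<Rightarrow> int \<Rightarrow> int set" where
  "sclass a b q k = {a + b*k + b*q*l | l. True}"

definition secondary_classes :: "int \<Rightarrow> int \<Rightarrow> int \<Rightarrow> int set set" where
  "secondary_classes a b q = {sclass a b q k | k. 0 \<le> k \<and> k < q}"

definition nu2 :: "int \<Rightarrow> int \<Rightarrow> int \<Rightarrow> int set list \<Rightarrow> int set" where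
  "nu2 a b q Xs = (THE C. C \<in> secondary_classes a b q \<and>
      sum_list (map (\<lambda>X. SOME x. x \<in> X) Xs) \<in> C)"

definition mu2 :: "int \<Rightarrow> int \<Rightarrow> int \<Rightarrow> int set list \<Rightarrow> int set" where
  "mu2 a b q Xs = (THE C. C \<in> secondary_classes a b q \<and>
      prod_list (map (\<lambda>X. SOME x. x \<in> X) Xs) \<in> C)"

definition esym :: "nat \<Rightarrow> int list \<Rightarrow> int" where
  "esym j ks = (\<Sum>S\<in>{S. S \<subseteq> {0..<length ks} \<and> card S = j}. \<Prod>i\<in>S. ks ! i)"

end

theory Submission
  imports Defs
 "HOL-Number_Theory.Cong"
begin


lemma prod_list_nth: "prod_list (xs::'a::comm_monoid_mult list) = (\<Prod>i=0..<length xs. xs ! i)"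
  by (induction xs) (simp_all add: prod.atLeast0_lessThan_Suc_shift del: prod.op_ivl_Suc)

lemma prod_expand:
  fixes a b :: int
  shows "prod_list (map (\<lambda>k. a + b*k) ks) = (\<Sum>j=0..length ks. a^(length ks - j) * b^j * esym j ks)"
proof -
  let ?n = "length ks" let ?A = "{0..<?n}"
  have "prod_list (map (\<lambda>k. a + b*k) ks) = (\<Prod>i\<in>?A. b * ks!i + a)"
    by (simp add: prod_list_nth add.commute)
  also have "\<dots> = (\<Sum>B\<in>Pow ?A. (\<Prod>i\<in>B. b * ks!i) * (\<Prod>i\<in>?A-B. a))"
    by (rule prod_add) simp
  also have "\<dots> = (\<Sum>B\<in>Pow ?A. a^(?n - card B) * b^(card B) * (\<Prod>i\<in>B. ks!i))"
  proof (rule sum.cong)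
    fix B assume "B \<in> Pow ?A"
    then have "B \<subseteq> ?A" by simp
    then have fB: "finite B" using finite_subset by blast
    have "card (?A - B) = ?n - card B" using \<open>B \<subseteq> ?A\<close> by (simp add: card_Diff_subset fB)
    then show "(\<Prod>i\<in>B. b * ks!i) * (\<Prod>i\<in>?A-B. a) = a^(?n - card B) * b^(card B) * (\<Prod>i\<in>B. ks!i)"
      by (simp add: prod.distrib)
  qed simp
  also have "\<dots> = (\<Sum>j=0..?n. (\<Sum>B\<in>{B. B \<in> Pow ?A \<and> card B = j}. a^(?n - card B) * b^(card B) * (\<Prod>i\<in>B. ks!i)))"
    by (rule sum.group[symmetric]) (auto simp: card_mono[where B="?A", simplified] dest: card_mono[of ?A, simplified])
  also have "\<dots> = (\<Sum>j=0..?n. a^(?n - j) * b^j * esym j ks)"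
  proof (rule sum.cong)
    fix j
    have "{B. B \<in> Pow ?A \<and> card B = j} = {S. S \<subseteq> ?A \<and> card S = j}" by auto
    then show "(\<Sum>B\<in>{B. B \<in> Pow ?A \<and> card B = j}. a^(?n - card B) * b^(card B) * (\<Prod>i\<in>B. ks!i)) = a^(?n - j) * b^j * esym j ks"
      by (simp add: esym_def sum_distrib_left)
  qed simp
  finally show ?thesis .
qed

lemma sclass_iff: "z \<in> sclass a b q k \<longleftrightarrow> [z = a + b*k] (mod b*q)"
  unfolding sclass_def cong_iff_dvd_diff dvd_def
  by (auto simp: algebra_simps)

lemma sclass_cong_a: "z \<in> sclass a b q k \<Longrightarrow> [z = a] (mod b)"
  unfolding sclass_def cong_iff_dvd_diff dvd_def
  by (auto simp: algebra_simps) (metis distrib_left mult.commute mult.left_commute)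

lemma idx_mem:
  assumes "b > 0" "[z = a] (mod b)"
  shows "z \<in> sclass a b q (((z - a) div b) mod q)"
proof -
  define t where "t = (z - a) div b"
  have "b dvd z - a" using assms(2) by (simp add: cong_iff_dvd_diff dvd_diff_commute)
  then have "z - a = b * t" unfolding t_def by simp
  moreover have "t = t mod q + q * (t div q)" by simp
  ultimately have "z = a + b * (t mod q) + b * q * (t div q)"
    by (metis add_diff_cancel_left' diff_add_cancel distrib_left mult.assoc add.assoc)
  then show ?thesis unfolding sclass_def t_def by blast
qed

lemma mem_idx:
  assumes "b > 0" "z \<in> sclass a b q k" "0 \<le> k" "k < q"
  shows "((z - a) div b) mod q = k"
proof -
  obtain l where "z = a + b*k + b*q*l" using assms(2) unfolding sclass_def by blast
  then have "z - a = (k + q*l) * b" by (simp add: algebra_simps)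
  then have "(z - a) div b = k + q*l" using assms(1) by simp
  then show ?thesis using assms(3,4) by simp
qed

lemma sclass_in_S: "0 \<le> k \<Longrightarrow> k < q \<Longrightarrow> sclass a b q k \<in> secondary_classes a b q"
  unfolding secondary_classes_def by blast

lemma idx_range: "q > 0 \<Longrightarrow> 0 \<le> z mod q \<and> z mod (q::int) < q" by simp

lemma the_class:
  assumes "b > 0" "q > 0" "[z = a] (mod b)"
  shows "(THE C. C \<in> secondary_classes a b q \<and> z \<in> C) = sclass a b q (((z - a) div b) mod q)"
proof (rule the_equality)
  show "sclass a b q (((z - a) div b) mod q) \<in> secondary_classes a b q \<and>
        z \<in> sclass a b q (((z - a) div b) mod q)"
    using assms idx_mem[OF assms(1,3)] sclass_in_S by simp
next
  fix C assume C: "C \<in> secondary_classes a b q \<and> z \<in> C"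
  then obtain k where k: "C = sclass a b q k" "0 \<le> k" "k < q" unfolding secondary_classes_def by blast
  then have "((z - a) div b) mod q = k" using mem_idx[OF assms(1)] C by blast
  then show "C = sclass a b q (((z - a) div b) mod q)" using k by simp
qed

lemma rep_mem: "C \<in> secondary_classes a b q \<Longrightarrow> (SOME x. x \<in> C) \<in> C"
proof -
  assume "C \<in> secondary_classes a b q"
  then obtain k where "C = sclass a b q k" unfolding secondary_classes_def by blast
  then have "a + b*k + b*q*0 \<in> C" unfolding sclass_def by blast
  then show ?thesis by (rule someI)
qed

lemma same_class_cong: "z \<in> sclass a b q k \<Longrightarrow> z' \<in> sclass a b q k \<Longrightarrow> [z = z'] (mod b*q)"
  by (metis sclass_iff cong_sym cong_trans)

lemma idx_cong:
  fixes a b q z z' :: int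
  assumes "b > 0" "q > 0" "[z = a] (mod b)" "[z' = z] (mod b*q)"
  shows "((z' - a) div b) mod q = ((z - a) div b) mod q"
proof -
  have "z \<in> sclass a b q (((z - a) div b) mod q)" by (rule idx_mem[OF assms(1,3)])
  then have "z' \<in> sclass a b q (((z - a) div b) mod q)"
    using assms(4) sclass_iff cong_trans by blast
  then show ?thesis using mem_idx assms by simp
qed

lemma sum_cong_const: "\<forall>x\<in>set xs. [x = c] (mod M) \<Longrightarrow> [sum_list xs = int (length xs) * c] (mod (M::int))"
proof (induction xs)
  case (Cons x xs)
  then have "[x + sum_list xs = c + int (length xs) * c] (mod M)" by (intro cong_add) auto
  then show ?case by (simp add: algebra_simps)
qed simp

lemma prod_cong_const: "\<forall>x\<in>set xs. [x = c] (mod M) \<Longrightarrow> [prod_list xs = c ^ length xs] (mod (M::int))"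
proof (induction xs)
  case (Cons x xs)
  then have "[x * prod_list xs = c * c ^ length xs] (mod M)" by (intro cong_mult) auto
  then show ?case by simp
qed simp

lemma sum_cong_pw: "length xs = length ys \<Longrightarrow> \<forall>i<length xs. [xs!i = ys!i] (mod M)
   \<Longrightarrow> [sum_list xs = sum_list ys] (mod (M::int))"
proof (induction xs arbitrary: ys)
  case (Cons x xs)
  then obtain y ys' where ys: "ys = y # ys'" by (cases ys) auto
  have "[xs!i = ys'!i] (mod M)" if "i < length xs" for i
    using Cons.prems(2) that ys by (metis Suc_less_eq length_Cons nth_Cons_Suc)
  then have "[sum_list xs = sum_list ys'] (mod M)" using Cons ys by simp
  moreover have "[x = y] (mod M)" using Cons.prems(2) ys by force
  ultimately show ?case using ys by (simp add: cong_add)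
qed simp

lemma prod_cong_pw: "length xs = length ys \<Longrightarrow> \<forall>i<length xs. [xs!i = ys!i] (mod M)
   \<Longrightarrow> [prod_list xs = prod_list ys] (mod (M::int))"
proof (induction xs arbitrary: ys)
  case (Cons x xs)
  then obtain y ys' where ys: "ys = y # ys'" by (cases ys) auto
  have "[xs!i = ys'!i] (mod M)" if "i < length xs" for i
    using Cons.prems(2) that ys by (metis Suc_less_eq length_Cons nth_Cons_Suc)
  then have "[prod_list xs = prod_list ys'] (mod M)" using Cons ys by simp
  moreover have "[x = y] (mod M)" using Cons.prems(2) ys by force
  ultimately show ?case using ys by (simp add: cong_mult)
qed simp

lemma reps_cong_a:
  fixes a b q :: int
  assumes "set Zs \<subseteq> secondary_classes a b q"
  shows "\<forall>x\<in>set (map (\<lambda>X. SOME x. x \<in> X) Zs). [x = a] (mod b)"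
proof
  fix x assume "x \<in> set (map (\<lambda>X. SOME x. x \<in> X) Zs)"
  then obtain C where C: "C \<in> set Zs" "x = (SOME x. x \<in> C)" by auto
  then have "C \<in> secondary_classes a b q" using assms by auto
  then obtain k where "C = sclass a b q k" unfolding secondary_classes_def by blast
  then show "[x = a] (mod b)" using C rep_mem[OF \<open>C \<in> secondary_classes a b q\<close>] sclass_cong_a by metis
qed

lemma nu2_eq:
  assumes "b > 0" "q > 0" "[int m * a = a] (mod b)" "length Zs = m" "set Zs \<subseteq> secondary_classes a b q"
  shows "nu2 a b q Zs = sclass a b q (((sum_list (map (\<lambda>X. SOME x. x \<in> X) Zs) - a) div b) mod q)"
    "[sum_list (map (\<lambda>X. SOME x. x \<in> X) Zs) = a] (mod b)"
proof -
  have "[sum_list (map (\<lambda>X. SOME x. x \<in> X) Zs) = int m * a] (mod b)"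
    using sum_cong_const[OF reps_cong_a[OF assms(5)]] assms(4) by simp
  then show c: "[sum_list (map (\<lambda>X. SOME x. x \<in> X) Zs) = a] (mod b)" using assms(3) cong_trans by blast
  show "nu2 a b q Zs = sclass a b q (((sum_list (map (\<lambda>X. SOME x. x \<in> X) Zs) - a) div b) mod q)"
    unfolding nu2_def by (rule the_class[OF assms(1,2) c])
qed

lemma mu2_eq:
  assumes "b > 0" "q > 0" "[a ^ n = a] (mod b)" "length Zs = n" "set Zs \<subseteq> secondary_classes a b q"
  shows "mu2 a b q Zs = sclass a b q (((prod_list (map (\<lambda>X. SOME x. x \<in> X) Zs) - a) div b) mod q)"
    "[prod_list (map (\<lambda>X. SOME x. x \<in> X) Zs) = a] (mod b)"
proof -
  have "[prod_list (map (\<lambda>X. SOME x. x \<in> X) Zs) = a ^ n] (mod b)"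
    using prod_cong_const[OF reps_cong_a[OF assms(5)]] assms(4) by simp
  then show c: "[prod_list (map (\<lambda>X. SOME x. x \<in> X) Zs) = a] (mod b)" using assms(3) cong_trans by blast
  show "mu2 a b q Zs = sclass a b q (((prod_list (map (\<lambda>X. SOME x. x \<in> X) Zs) - a) div b) mod q)"
    unfolding mu2_def by (rule the_class[OF assms(1,2) c])
qed

lemma class_in_S: "q > 0 \<Longrightarrow> sclass a b q (z mod q) \<in> secondary_classes a b q"
  by (rule sclass_in_S) auto


lemma mem_cong_mem: "z \<in> sclass a b q k \<Longrightarrow> [z' = z] (mod b*q) \<Longrightarrow> z' \<in> sclass a b q k"
  using sclass_iff cong_trans by blast

lemma sum_lin: "sum_list (map (\<lambda>k. a + b*k) ks) = int (length ks) * a + b * sum_list (ks::int list)"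
  by (induction ks) (auto simp: algebra_simps)

lemma esym0: "esym 0 ks = 1"
proof -
  have "{S. S \<subseteq> {0..<length ks} \<and> card S = 0} = {{}}"
    by (auto dest: finite_subset)
  then show ?thesis unfolding esym_def by simp
qed

lemma prod_lin:
  fixes a b :: int
  shows "prod_list (map (\<lambda>k. a + b*k) ks) = a ^ length ks + b * (\<Sum>j=1..length ks. a^(length ks - j) * b^(j-1) * esym j ks)"
proof -
  let ?n = "length ks"
  have "prod_list (map (\<lambda>k. a + b*k) ks) = a^(?n - 0) * b^0 * esym 0 ks + (\<Sum>j=Suc 0..?n. a^(?n - j) * b^j * esym j ks)"
    unfolding prod_expand by (rule sum.atLeast_Suc_atMost) simp
  also have "(\<Sum>j=Suc 0..?n. a^(?n - j) * b^j * esym j ks) = b * (\<Sum>j=1..?n. a^(?n - j) * b^(j-1) * esym j ks)"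
    unfolding sum_distrib_left
  proof (rule sum.cong)
    fix j assume "j \<in> {1..?n}"
    then have "b^j = b * b^(j-1)" by (metis One_nat_def Suc_diff_1 atLeastAtMost_iff less_eq_Suc_le power_Suc)
    then show "a^(?n - j) * b^j * esym j ks = b * (a^(?n - j) * b^(j-1) * esym j ks)" by simp
  qed simp
  finally show ?thesis by (simp add: esym0)
qed



theorem mainTheorem2:
  fixes a b q :: int and m n :: nat
  assumes hb: "b \<ge> 1"
    and ha: "0 \<le> a" "a \<le> b - 1"
    and hm: "m \<ge> 2" "[int m * a = a] (mod b)"
            "\<forall>m'. 2 \<le> m' \<and> m' < m \<longrightarrow> \<not> [int m' * a = a] (mod b)"
    and hn: "n \<ge> 2" "[a ^ n = a] (mod b)"
            "\<forall>n'. 2 \<le> n' \<and> n' < n \<longrightarrow> \<not> [a ^ n' = a] (mod b)"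
    and hq: "q \<ge> 1"
  defines "I \<equiv> (int m - 1) * a div b"
    and "J \<equiv> (a ^ n - a) div b"
    and "X \<equiv> sclass a b q"
    and "S \<equiv> secondary_classes a b q"
  shows
    \<comment> \<open>well-definedness: for every choice of representatives the sum/product
        lies in the secondary class nu''/mu''\<close>
    "(\<forall>ks xs. length ks = m \<and> (\<forall>i<m. 0 \<le> ks ! i \<and> ks ! i < q) \<and> length xs = m
        \<and> (\<forall>i<m. xs ! i \<in> X (ks ! i))
        \<longrightarrow> nu2 a b q (map X ks) \<in> S \<and> sum_list xs \<in> nu2 a b q (map X ks))
   \<and> (\<forall>ks xs. length ks = n \<and> (\<forall>i<n. 0 \<le> ks ! i \<and> ks ! i < q) \<and> length xs = n
        \<and> (\<forall>i<n. xs ! i \<in> X (ks ! i))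
        \<longrightarrow> mu2 a b q (map X ks) \<in> S \<and> prod_list xs \<in> mu2 a b q (map X ks))
   \<comment> \<open>commutativity (invariance under permutation of arguments)\<close>
   \<and> (\<forall>Xs Ys. length Xs = m \<and> set Xs \<subseteq> S \<and> mset Ys = mset Xs
        \<longrightarrow> nu2 a b q Xs = nu2 a b q Ys)
   \<and> (\<forall>Xs Ys. length Xs = n \<and> set Xs \<subseteq> S \<and> mset Ys = mset Xs
        \<longrightarrow> mu2 a b q Xs = mu2 a b q Ys)
   \<comment> \<open>polyadic distributivity, sum in any argument position i of mu''\<close>
   \<and> (\<forall>Xs Ys i. length Xs = n \<and> set Xs \<subseteq> S \<and> length Ys = m \<and> set Ys \<subseteq> S \<and> i < n
        \<longrightarrow> mu2 a b q (Xs[i := nu2 a b q Ys])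
            = nu2 a b q (map (\<lambda>Y. mu2 a b q (Xs[i := Y])) Ys))
   \<comment> \<open>explicit formulas\<close>
   \<and> (\<forall>ks. length ks = m \<and> (\<forall>i<m. 0 \<le> ks ! i \<and> ks ! i < q)
        \<longrightarrow> nu2 a b q (map X ks) = X ((sum_list ks + I) mod q))
   \<and> (\<forall>ks. length ks = n \<and> (\<forall>i<n. 0 \<le> ks ! i \<and> ks ! i < q)
        \<longrightarrow> mu2 a b q (map X ks)
            = X (((\<Sum>j=1..n. a ^ (n - j) * b ^ (j - 1) * esym j ks) + J) mod q))"
  proof -
  let ?r = "\<lambda>X::int set. SOME x. x \<in> X"
  have b0: "b > 0" and q0: "q > 0" using hb hq by auto
  have XinS: "X k \<in> S" if "0 \<le> k" "k < q" for k
    unfolding X_def S_def using sclass_in_S that by blast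
  have mapS: "set (map X ks) \<subseteq> S" if "\<forall>i<length ks. 0 \<le> ks ! i \<and> ks ! i < q" for ks
    using that XinS by (auto simp: in_set_conv_nth)
  have repX: "?r (X k) \<in> X k" if "0 \<le> k" "k < q" for k
    using rep_mem XinS[OF that] unfolding S_def by blast
  have linX: "a + b*k \<in> X k" for k
    unfolding X_def sclass_def by force
  have linRep: "[a + b*k = ?r (X k)] (mod b*q)" if "0 \<le> k" "k < q" for k
    using same_class_cong linX[of k] repX[OF that] unfolding X_def by blast
  have nuS: "nu2 a b q Zs = X (((sum_list (map ?r Zs) - a) div b) mod q) \<and>
     [sum_list (map ?r Zs) = a] (mod b) \<and> nu2 a b q Zs \<in> S \<and> sum_list (map ?r Zs) \<in> nu2 a b q Zs"
    if "length Zs = m" "set Zs \<subseteq> S" for Zs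
    using nu2_eq[OF b0 q0 hm(2) that(1)] that(2) class_in_S[OF q0] idx_mem[OF b0]
    unfolding X_def S_def by metis
  have muS: "mu2 a b q Zs = X (((prod_list (map ?r Zs) - a) div b) mod q) \<and>
     [prod_list (map ?r Zs) = a] (mod b) \<and> mu2 a b q Zs \<in> S \<and> prod_list (map ?r Zs) \<in> mu2 a b q Zs"
    if "length Zs = n" "set Zs \<subseteq> S" for Zs
    using mu2_eq[OF b0 q0 hn(2) that(1)] that(2) class_in_S[OF q0] idx_mem[OF b0]
    unfolding X_def S_def by metis
  have repsX: "[xs ! i = map ?r (map X ks) ! i] (mod b*q)"
    if "i < length ks" "length xs = length ks" "\<forall>i<length ks. 0 \<le> ks ! i \<and> ks ! i < q"
       "xs ! i \<in> X (ks ! i)" for xs ks i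
    using same_class_cong repX that unfolding X_def by force
  have P1: "\<forall>ks xs. length ks = m \<and> (\<forall>i<m. 0 \<le> ks ! i \<and> ks ! i < q) \<and> length xs = m
        \<and> (\<forall>i<m. xs ! i \<in> X (ks ! i))
        \<longrightarrow> nu2 a b q (map X ks) \<in> S \<and> sum_list xs \<in> nu2 a b q (map X ks)"
  proof (intro allI impI)
    fix ks xs :: "int list"
    assume A: "length ks = m \<and> (\<forall>i<m. 0 \<le> ks ! i \<and> ks ! i < q) \<and> length xs = m
        \<and> (\<forall>i<m. xs ! i \<in> X (ks ! i))"
    have N: "nu2 a b q (map X ks) \<in> S \<and> sum_list (map ?r (map X ks)) \<in> nu2 a b q (map X ks)"
      using nuS[of "map X ks"] mapS[of ks] A by auto
    have "[sum_list xs = sum_list (map ?r (map X ks))] (mod b*q)"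
      by (rule sum_cong_pw) (use A repsX in auto)
    then show "nu2 a b q (map X ks) \<in> S \<and> sum_list xs \<in> nu2 a b q (map X ks)"
      using N unfolding S_def secondary_classes_def using mem_cong_mem by blast
  qed
  have P2: "\<forall>ks xs. length ks = n \<and> (\<forall>i<n. 0 \<le> ks ! i \<and> ks ! i < q) \<and> length xs = n
        \<and> (\<forall>i<n. xs ! i \<in> X (ks ! i))
        \<longrightarrow> mu2 a b q (map X ks) \<in> S \<and> prod_list xs \<in> mu2 a b q (map X ks)"
  proof (intro allI impI)
    fix ks xs :: "int list"
    assume A: "length ks = n \<and> (\<forall>i<n. 0 \<le> ks ! i \<and> ks ! i < q) \<and> length xs = n
        \<and> (\<forall>i<n. xs ! i \<in> X (ks ! i))"
    have N: "mu2 a b q (map X ks) \<in> S \<and> prod_list (map ?r (map X ks)) \<in> mu2 a b q (map X ks)"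
      using muS[of "map X ks"] mapS[of ks] A by auto
    have "[prod_list xs = prod_list (map ?r (map X ks))] (mod b*q)"
      by (rule prod_cong_pw) (use A repsX in auto)
    then show "mu2 a b q (map X ks) \<in> S \<and> prod_list xs \<in> mu2 a b q (map X ks)"
      using N unfolding S_def secondary_classes_def using mem_cong_mem by blast
  qed
  have P3: "\<forall>Xs Ys. length Xs = m \<and> set Xs \<subseteq> S \<and> mset Ys = mset Xs
        \<longrightarrow> nu2 a b q Xs = nu2 a b q Ys"
  proof (intro allI impI)
    fix Xs Ys :: "int set list"
    assume "length Xs = m \<and> set Xs \<subseteq> S \<and> mset Ys = mset Xs"
    then have "mset (map ?r Ys) = mset (map ?r Xs)" by simp
    then have "sum_list (map ?r Xs) = sum_list (map ?r Ys)" by (metis sum_mset_sum_list)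
    then show "nu2 a b q Xs = nu2 a b q Ys" by (simp add: nu2_def)
  qed
  have P4: "\<forall>Xs Ys. length Xs = n \<and> set Xs \<subseteq> S \<and> mset Ys = mset Xs
        \<longrightarrow> mu2 a b q Xs = mu2 a b q Ys"
  proof (intro allI impI)
    fix Xs Ys :: "int set list"
    assume "length Xs = n \<and> set Xs \<subseteq> S \<and> mset Ys = mset Xs"
    then have "mset (map ?r Ys) = mset (map ?r Xs)" by simp
    then have "prod_list (map ?r Xs) = prod_list (map ?r Ys)" by (metis prod_mset_prod_list)
    then show "mu2 a b q Xs = mu2 a b q Ys" by (simp add: mu2_def)
  qed
  have P5: "\<forall>Xs Ys i. length Xs = n \<and> set Xs \<subseteq> S \<and> length Ys = m \<and> set Ys \<subseteq> S \<and> i < n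
        \<longrightarrow> mu2 a b q (Xs[i := nu2 a b q Ys])
            = nu2 a b q (map (\<lambda>Y. mu2 a b q (Xs[i := Y])) Ys)"
  proof (intro allI impI)
    fix Xs Ys :: "int set list" and i :: nat
    assume A: "length Xs = n \<and> set Xs \<subseteq> S \<and> length Ys = m \<and> set Ys \<subseteq> S \<and> i < n"
    define C where "C = nu2 a b q Ys"
    have NC: "[sum_list (map ?r Ys) = a] (mod b)" "C \<in> S" "sum_list (map ?r Ys) \<in> C"
      using nuS[of Ys] A unfolding C_def by auto
    have repC: "?r C \<in> C" using rep_mem NC(2) unfolding S_def by blast
    have cC: "[?r C = sum_list (map ?r Ys)] (mod b*q)"
      using NC(2) repC NC(3) same_class_cong unfolding S_def secondary_classes_def by blast
    define PA where "PA = prod_list (map ?r (take i Xs))"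
    define PB where "PB = prod_list (map ?r (drop (Suc i) Xs))"
    have splitR: "prod_list (map ?r (Xs[i := Y])) = PA * ?r Y * PB" for Y
    proof -
      have "Xs[i := Y] = take i Xs @ Y # drop (Suc i) Xs"
        using A by (simp add: upd_conv_take_nth_drop)
      then show ?thesis unfolding PA_def PB_def by (simp add: algebra_simps)
    qed
    have updS: "set (Xs[i := Y]) \<subseteq> S" if "Y \<in> S" for Y
      using A that set_update_subset_insert by fastforce
    have HLe: "mu2 a b q (Xs[i := C]) = X (((prod_list (map ?r (Xs[i := C])) - a) div b) mod q)"
      "[prod_list (map ?r (Xs[i := C])) = a] (mod b)"
      using muS[of "Xs[i := C]"] A updS[OF NC(2)] by auto
    define Zs where "Zs = map (\<lambda>Y. mu2 a b q (Xs[i := Y])) Ys"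
    have ZS: "set Zs \<subseteq> S" "length Zs = m"
    proof -
      show "set Zs \<subseteq> S"
      proof
        fix Z assume "Z \<in> set Zs"
        then obtain Y where Y: "Y \<in> set Ys" "Z = mu2 a b q (Xs[i := Y])" unfolding Zs_def by auto
        then have "Y \<in> S" using A by auto
        then show "Z \<in> S" using muS[of "Xs[i := Y]"] updS A Y by auto
      qed
      show "length Zs = m" using A unfolding Zs_def by simp
    qed
    have HRi: "nu2 a b q Zs = X (((sum_list (map ?r Zs) - a) div b) mod q)"
      using nuS[OF ZS(2,1)] by auto
    have cY: "[?r (mu2 a b q (Xs[i := Y])) = PA * ?r Y * PB] (mod b*q)" if "Y \<in> S" for Y
    proof -
      have M: "mu2 a b q (Xs[i := Y]) \<in> S" "prod_list (map ?r (Xs[i := Y])) \<in> mu2 a b q (Xs[i := Y])"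
        using muS[of "Xs[i := Y]"] A updS[OF that] by auto
      then have "?r (mu2 a b q (Xs[i := Y])) \<in> mu2 a b q (Xs[i := Y])"
        using rep_mem unfolding S_def by blast
      then show ?thesis using M splitR[of Y] same_class_cong unfolding S_def secondary_classes_def by force
    qed
    have "[sum_list (map ?r Zs) = sum_list (map (\<lambda>Y. PA * ?r Y * PB) Ys)] (mod b*q)"
    proof (rule sum_cong_pw)
      show "length (map ?r Zs) = length (map (\<lambda>Y. PA * ?r Y * PB) Ys)" using ZS A by simp
      show "\<forall>j<length (map ?r Zs). [map ?r Zs ! j = map (\<lambda>Y. PA * ?r Y * PB) Ys ! j] (mod b*q)"
      proof (intro allI impI)
        fix j assume j: "j < length (map ?r Zs)"
        then have jY: "j < length Ys" unfolding Zs_def by simp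
        then have "Ys ! j \<in> S" using A nth_mem by blast
        then show "[map ?r Zs ! j = map (\<lambda>Y. PA * ?r Y * PB) Ys ! j] (mod b*q)"
          using cY[of "Ys ! j"] jY unfolding Zs_def by simp
      qed
    qed
    also have "sum_list (map (\<lambda>Y. PA * ?r Y * PB) Ys) = PA * sum_list (map ?r Ys) * PB"
      by (induction Ys) (auto simp: algebra_simps)
    also have "[PA * sum_list (map ?r Ys) * PB = PA * ?r C * PB] (mod b*q)"
      using cC by (intro cong_mult cong_refl) (simp add: cong_sym)
    also have "PA * ?r C * PB = prod_list (map ?r (Xs[i := C]))" using splitR by simp
    finally have "[sum_list (map ?r Zs) = prod_list (map ?r (Xs[i := C]))] (mod b*q)" .
    then have "((sum_list (map ?r Zs) - a) div b) mod q = ((prod_list (map ?r (Xs[i := C])) - a) div b) mod q"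
      by (rule idx_cong[OF b0 q0 HLe(2)])
    then show "mu2 a b q (Xs[i := nu2 a b q Ys]) = nu2 a b q (map (\<lambda>Y. mu2 a b q (Xs[i := Y])) Ys)"
      using HLe(1) HRi unfolding C_def Zs_def by simp
  qed
  have P6: "\<forall>ks. length ks = m \<and> (\<forall>i<m. 0 \<le> ks ! i \<and> ks ! i < q)
        \<longrightarrow> nu2 a b q (map X ks) = X ((sum_list ks + I) mod q)"
  proof (intro allI impI)
    fix ks :: "int list"
    assume A: "length ks = m \<and> (\<forall>i<m. 0 \<le> ks ! i \<and> ks ! i < q)"
    let ?z = "sum_list (map ?r (map X ks))"
    let ?w = "sum_list (map (\<lambda>k. a + b*k) ks)"
    have L: "length (map X ks) = m" using A by simp
    have Sm: "set (map X ks) \<subseteq> S" by (rule mapS) (use A in simp)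
    have N: "nu2 a b q (map X ks) = X (((?z - a) div b) mod q)" "[?z = a] (mod b)"
      using nuS[OF L Sm] by blast+
    have "[?w = ?z] (mod b*q)"
      by (rule sum_cong_pw) (use A linRep in auto)
    then have "((?w - a) div b) mod q = ((?z - a) div b) mod q"
      by (rule idx_cong[OF b0 q0 N(2)])
    moreover have "(?w - a) div b = sum_list ks + I"
    proof -
      have "?w = int m * a + b * sum_list ks" using sum_lin[of a b ks] A by simp
      then have "?w - a = (int m - 1) * a + sum_list ks * b" by (simp add: algebra_simps)
      then show ?thesis unfolding I_def using b0 by simp
    qed
    ultimately show "nu2 a b q (map X ks) = X ((sum_list ks + I) mod q)" using N(1) by simp
  qed
  have P7: "\<forall>ks. length ks = n \<and> (\<forall>i<n. 0 \<le> ks ! i \<and> ks ! i < q)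
        \<longrightarrow> mu2 a b q (map X ks)
            = X (((\<Sum>j=1..n. a ^ (n - j) * b ^ (j - 1) * esym j ks) + J) mod q)"
  proof (intro allI impI)
    fix ks :: "int list"
    assume A: "length ks = n \<and> (\<forall>i<n. 0 \<le> ks ! i \<and> ks ! i < q)"
    let ?z = "prod_list (map ?r (map X ks))"
    let ?w = "prod_list (map (\<lambda>k. a + b*k) ks)"
    let ?T = "\<Sum>j=1..n. a ^ (n - j) * b ^ (j - 1) * esym j ks"
    have L: "length (map X ks) = n" using A by simp
    have Sm: "set (map X ks) \<subseteq> S" by (rule mapS) (use A in simp)
    have N: "mu2 a b q (map X ks) = X (((?z - a) div b) mod q)" "[?z = a] (mod b)"
      using muS[OF L Sm] by blast+
    have "[?w = ?z] (mod b*q)"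
      by (rule prod_cong_pw) (use A linRep in auto)
    then have "((?w - a) div b) mod q = ((?z - a) div b) mod q"
      by (rule idx_cong[OF b0 q0 N(2)])
    moreover have "(?w - a) div b = ?T + J"
    proof -
      have "?w = a ^ n + b * ?T" using prod_lin[of a b ks] A by simp
      then have eq: "?w - a = (a ^ n - a) + ?T * b" by (simp add: algebra_simps)
      have e: "((a ^ n - a) + ?T * b) div b = ?T + (a ^ n - a) div b"
        by (rule div_mult_self1) (use b0 in simp)
      show ?thesis unfolding J_def eq e by (rule refl)
    qed
    ultimately show "mu2 a b q (map X ks) = X ((?T + J) mod q)" using N(1) by simp
  qed
  show ?thesis using P1 P2 P3 P4 P5 P6 P7 by blast
qed

end
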